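(* Let $G$ be a graph and let $S\subseteq V(G)$ be a twin cover of $G$. Then there exists an imbalance optimal ordering of $G$ in which, for every connected component $C$ of $G-S$, the vertices of $C$ appear consecutively.
   Context: All graphs are finite, simple and undirected. An ordering $\sigma$ of $V(G)$ assigns to each vertex $v$ the sets $N_L(v,\sigma)$ and $N_R(v,\sigma)$ of neighbours of $v$ preceding and following $v$, respectively; $\mathcal{I}(v,\sigma)=\big||N_L(v,\sigma)|-|N_R(v,\sigma)|\big|$, $\mathcal{I}(\sigma)=\sum_v\mathcal{I}(v,\sigma)$, $\mathcal{I}(G)=\min_\sigma\mathcal{I}(\sigma)$, and $\sigma$ is imbalance optimal if $\mathcal{I}(\sigma)=\mathcal{I}(G)$. A twin cover of $G$ is a set $S\subseteq V(G)$ such that every connected component $X$ of $G-S$ is a set of true twins in $G$ ($N[u]=N[v]$ for all $u,v\in X$). *)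

theory Defs
  imports Main
begin

definition graph :: "'a set \<Rightarrow> ('a \<Rightarrow> 'a \<Rightarrow> bool) \<Rightarrow> bool" where
  "graph V E \<longleftrightarrow> finite V \<and> (\<forall>u v. E u v \<longrightarrow> u \<in> V \<and> v \<in> V)
     \<and> (\<forall>u v. E u v \<longrightarrow> E v u) \<and> (\<forall>v. \<not> E v v)"

definition is_ordering :: "'a set \<Rightarrow> 'a list \<Rightarrow> bool" where
  "is_ordering V \<sigma> \<longleftrightarrow> distinct \<sigma> \<and> set \<sigma> = V"

definition precedes :: "'a list \<Rightarrow> 'a \<Rightarrow> 'a \<Rightarrow> bool" where
  "precedes \<sigma> u v \<longleftrightarrow> (\<exists>i j. i < j \<and> j < length \<sigma> \<and> \<sigma> ! i = u \<and> \<sigma> ! j = v)"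

definition left_nbrs :: "('a \<Rightarrow> 'a \<Rightarrow> bool) \<Rightarrow> 'a list \<Rightarrow> 'a \<Rightarrow> 'a set" where
  "left_nbrs E \<sigma> v = {u \<in> set \<sigma>. E v u \<and> precedes \<sigma> u v}"

definition right_nbrs :: "('a \<Rightarrow> 'a \<Rightarrow> bool) \<Rightarrow> 'a list \<Rightarrow> 'a \<Rightarrow> 'a set" where
  "right_nbrs E \<sigma> v = {u \<in> set \<sigma>. E v u \<and> precedes \<sigma> v u}"

definition vertex_imbalance :: "('a \<Rightarrow> 'a \<Rightarrow> bool) \<Rightarrow> 'a list \<Rightarrow> 'a \<Rightarrow> nat" where
  "vertex_imbalance E \<sigma> v =
     nat \<bar>int (card (left_nbrs E \<sigma> v)) - int (card (right_nbrs E \<sigma> v))\<bar>"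

definition ordering_imbalance :: "('a \<Rightarrow> 'a \<Rightarrow> bool) \<Rightarrow> 'a list \<Rightarrow> nat" where
  "ordering_imbalance E \<sigma> = (\<Sum>v\<in>set \<sigma>. vertex_imbalance E \<sigma> v)"

definition graph_imbalance :: "'a set \<Rightarrow> ('a \<Rightarrow> 'a \<Rightarrow> bool) \<Rightarrow> nat" where
  "graph_imbalance V E = Min {ordering_imbalance E \<sigma> | \<sigma>. is_ordering V \<sigma>}"

definition imbalance_optimal :: "'a set \<Rightarrow> ('a \<Rightarrow> 'a \<Rightarrow> bool) \<Rightarrow> 'a list \<Rightarrow> bool" where
  "imbalance_optimal V E \<sigma> \<longleftrightarrow> is_ordering V \<sigma> \<and> ordering_imbalance E \<sigma> = graph_imbalance V E"

definition component_of :: "'a set \<Rightarrow> ('a \<Rightarrow> 'a \<Rightarrow> bool) \<Rightarrow> 'a set \<Rightarrow> bool" where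
  "component_of W E C \<longleftrightarrow> (\<exists>v\<in>W. C = {w. (\<lambda>x y. x \<in> W \<and> y \<in> W \<and> E x y)\<^sup>*\<^sup>* v w})"

definition closed_nbhd :: "'a set \<Rightarrow> ('a \<Rightarrow> 'a \<Rightarrow> bool) \<Rightarrow> 'a \<Rightarrow> 'a set" where
  "closed_nbhd V E v = insert v {u \<in> V. E v u}"

definition twin_cover :: "'a set \<Rightarrow> ('a \<Rightarrow> 'a \<Rightarrow> bool) \<Rightarrow> 'a set \<Rightarrow> bool" where
  "twin_cover V E S \<longleftrightarrow> S \<subseteq> V \<and>
     (\<forall>X. component_of (V - S) E X \<longrightarrow> (\<forall>u\<in>X. \<forall>v\<in>X. closed_nbhd V E u = closed_nbhd V E v))"

definition consecutive_in :: "'a list \<Rightarrow> 'a set \<Rightarrow> bool" where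
  "consecutive_in \<sigma> C \<longleftrightarrow> (\<exists>xs ys zs. \<sigma> = xs @ ys @ zs \<and> set ys = C)"

end

theory Submission
  imports Defs
begin

lemma prec_set: "precedes s a b \<Longrightarrow> a \<in> set s \<and> b \<in> set s"
  unfolding precedes_def by auto

lemma prec_append_lr:
  assumes "a \<in> set P" "b \<in> set Q" shows "precedes (P @ Q) a b"
proof -
  obtain i where i: "i < length P" "P ! i = a" using assms(1) by (auto simp: in_set_conv_nth)
  obtain j where j: "j < length Q" "Q ! j = b" using assms(2) by (auto simp: in_set_conv_nth)
  show ?thesis unfolding precedes_def
    by (rule exI[of _ i], rule exI[of _ "length P + j"]) (use i j in \<open>auto simp: nth_append\<close>)
qed

lemma prec_append_suffix:
  assumes "distinct (P @ Q)" "a \<in> set Q" "precedes (P @ Q) a b" shows "b \<in> set Q"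
proof -
  obtain i j where ij: "i < j" "j < length (P@Q)" "(P@Q) ! i = a" "(P@Q) ! j = b"
    using assms(3) unfolding precedes_def by auto
  obtain k where k: "k < length Q" "Q ! k = a" using assms(2) by (auto simp: in_set_conv_nth)
  have "(P@Q) ! (length P + k) = a" using k by (simp add: nth_append)
  hence "i = length P + k" using ij k assms(1) nth_eq_iff_index_eq[OF assms(1), of i "length P + k"] by simp
  hence "j \<ge> length P" using ij by simp
  thus ?thesis using ij by (auto simp: nth_append)
qed

lemma prec_append_prefix:
  assumes "distinct (P @ Q)" "b \<in> set P" "precedes (P @ Q) a b" shows "a \<in> set P"
proof -
  obtain i j where ij: "i < j" "j < length (P@Q)" "(P@Q) ! i = a" "(P@Q) ! j = b"
    using assms(3) unfolding precedes_def by auto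
  obtain k where k: "k < length P" "P ! k = b" using assms(2) by (auto simp: in_set_conv_nth)
  have "(P@Q) ! k = b" using k by (simp add: nth_append)
  hence "j = k" using ij k nth_eq_iff_index_eq[OF assms(1), of j k] by simp
  hence "i < length P" using ij k by simp
  thus ?thesis using ij by (auto simp: nth_append)
qed

lemma prec_asym: assumes "distinct s" "precedes s a b" shows "\<not> precedes s b a"
proof
  assume "precedes s b a"
  then obtain i j where "i < j" "j < length s" "s ! i = b" "s ! j = a" unfolding precedes_def by auto
  moreover obtain i' j' where "i' < j'" "j' < length s" "s ! i' = a" "s ! j' = b"
    using assms(2) unfolding precedes_def by auto
  ultimately show False using nth_eq_iff_index_eq[OF assms(1)]
    by (metis order.strict_trans order_less_irrefl)
qed

lemma prec_irrefl: assumes "distinct s" shows "\<not> precedes s a a"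
  using prec_asym[OF assms] by blast

lemma prec_total: assumes "a \<in> set s" "b \<in> set s" "a \<noteq> b" shows "precedes s a b \<or> precedes s b a"
proof -
  obtain i where i: "i < length s" "s ! i = a" using assms(1) by (auto simp: in_set_conv_nth)
  obtain j where j: "j < length s" "s ! j = b" using assms(2) by (auto simp: in_set_conv_nth)
  have "i \<noteq> j" using i j assms(3) by auto
  thus ?thesis unfolding precedes_def using i j by (metis linorder_neqE_nat)
qed

lemma prec_rev: "precedes (rev s) a b \<longleftrightarrow> precedes s b a"
proof
  assume "precedes (rev s) a b"
  then obtain i j where ij: "i < j" "j < length s" "rev s ! i = a" "rev s ! j = b"
    unfolding precedes_def by auto
  show "precedes s b a" unfolding precedes_def
    by (rule exI[of _ "length s - Suc j"], rule exI[of _ "length s - Suc i"]) (use ij in \<open>auto simp: rev_nth\<close>)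
next
  assume "precedes s b a"
  then obtain i j where ij: "i < j" "j < length s" "s ! i = b" "s ! j = a"
    unfolding precedes_def by auto
  show "precedes (rev s) a b" unfolding precedes_def
    by (rule exI[of _ "length s - Suc j"], rule exI[of _ "length s - Suc i"]) (use ij in \<open>auto simp: rev_nth\<close>)
qed

lemma split_left:
  assumes "distinct (L @ v # R)"
  shows "left_nbrs E (L @ v # R) v = {u \<in> set L. E v u}"
proof -
  have "precedes (L @ v # R) u v \<longleftrightarrow> u \<in> set L" for u
  proof
    assume "precedes (L @ v # R) u v"
    thus "u \<in> set L" using prec_append_prefix[of "L @ [v]" R v u] assms prec_irrefl[OF assms, of v]
      by auto
  next
    assume "u \<in> set L" thus "precedes (L @ v # R) u v"
      using prec_append_lr[of u L v "v # R"] by simp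
  qed
  thus ?thesis unfolding left_nbrs_def by auto
qed

lemma split_right:
  assumes "distinct (L @ v # R)"
  shows "right_nbrs E (L @ v # R) v = {u \<in> set R. E v u}"
proof -
  have "precedes (L @ v # R) v u \<longleftrightarrow> u \<in> set R" for u
  proof
    assume h: "precedes (L @ v # R) v u"
    have "u \<in> set (v # R)" using prec_append_suffix[of L "v # R" v u] assms h by simp
    thus "u \<in> set R" using h prec_irrefl[OF assms, of v] by auto
  next
    assume "u \<in> set R" thus "precedes (L @ v # R) v u"
      using prec_append_lr[of v "L @ [v]" u R] by simp
  qed
  thus ?thesis unfolding right_nbrs_def by auto
qed

lemma prec_Nil[simp]: "\<not> precedes [] a b"
  unfolding precedes_def by auto

lemma prec_Cons: "precedes (c # s) a b \<longleftrightarrow> (c = a \<and> b \<in> set s) \<or> precedes s a b"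
proof
  assume "precedes (c # s) a b"
  then obtain i j where ij: "i < j" "j < length (c#s)" "(c#s) ! i = a" "(c#s) ! j = b"
    unfolding precedes_def by blast
  show "(c = a \<and> b \<in> set s) \<or> precedes s a b"
  proof (cases i)
    case 0
    then obtain j' where "j = Suc j'" using ij by (cases j) auto
    thus ?thesis using ij 0 by (auto simp: in_set_conv_nth)
  next
    case (Suc i')
    then obtain j' where "j = Suc j'" using ij by (cases j) auto
    hence "i' < j'" "j' < length s" "s ! i' = a" "s ! j' = b" using ij Suc by auto
    thus ?thesis unfolding precedes_def by blast
  qed
next
  assume "(c = a \<and> b \<in> set s) \<or> precedes s a b"
  thus "precedes (c # s) a b"
  proof
    assume h: "c = a \<and> b \<in> set s"
    then obtain j where "j < length s" "s ! j = b" by (auto simp: in_set_conv_nth)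
    thus ?thesis using h unfolding precedes_def
      by (intro exI[of _ 0] exI[of _ "Suc j"]) auto
  next
    assume "precedes s a b"
    then obtain i j where ij: "i < j" "j < length s" "s ! i = a" "s ! j = b"
      unfolding precedes_def by blast
    thus ?thesis unfolding precedes_def
      by (intro exI[of _ "Suc i"] exI[of _ "Suc j"]) auto
  qed
qed

lemma prec_append: "precedes (xs @ ys) a b \<longleftrightarrow> precedes xs a b \<or> (a \<in> set xs \<and> b \<in> set ys) \<or> precedes ys a b"
  by (induction xs) (auto simp: prec_Cons)

lemma prec_single[simp]: "\<not> precedes [c] a b"
  by (simp add: prec_Cons)

definition Dv :: "('a \<Rightarrow> 'a \<Rightarrow> bool) \<Rightarrow> 'a list \<Rightarrow> 'a \<Rightarrow> int" where
  "Dv E s v = int (card (left_nbrs E s v)) - int (card (right_nbrs E s v))"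

definition nbs :: "('a \<Rightarrow> 'a \<Rightarrow> bool) \<Rightarrow> 'a \<Rightarrow> 'a set \<Rightarrow> nat" where
  "nbs E v T = card {u \<in> T. E v u}"

lemma Dv_split:
  assumes "distinct (L @ v # R)"
  shows "Dv E (L @ v # R) v = int (nbs E v (set L)) - int (nbs E v (set R))"
  unfolding Dv_def nbs_def using split_left[OF assms] split_right[OF assms] by simp

lemma cost_int: "int (ordering_imbalance E s) = (\<Sum>v\<in>set s. \<bar>Dv E s v\<bar>)"
  unfolding ordering_imbalance_def vertex_imbalance_def Dv_def by (simp add: of_nat_sum)

lemma nbs_union:
  assumes "finite A" "finite B" "A \<inter> B = {}"
  shows "nbs E v (A \<union> B) = nbs E v A + nbs E v B"
proof -
  have "{u \<in> A \<union> B. E v u} = {u \<in> A. E v u} \<union> {u \<in> B. E v u}" by auto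
  moreover have "card ({u \<in> A. E v u} \<union> {u \<in> B. E v u}) = card {u \<in> A. E v u} + card {u \<in> B. E v u}"
    by (rule card_Un_disjoint) (use assms in auto)
  ultimately show ?thesis unfolding nbs_def by simp
qed

lemma nbs_insert:
  assumes "finite A" "c \<notin> A"
  shows "nbs E v (insert c A) = (if E v c then 1 else 0) + nbs E v A"
proof -
  have "nbs E v {c} = (if E v c then 1 else 0)"
  proof (cases "E v c")
    case True
    hence "{u \<in> {c}. E v u} = {c}" by auto
    thus ?thesis using True unfolding nbs_def by simp
  qed (simp add: nbs_def)
  thus ?thesis using nbs_union[of "{c}" A E v] assms by simp
qed

lemma Dv_same:
  assumes "distinct (L @ u # R)" "distinct (L' @ u # R')" "set L = set L'" "set R = set R'"
  shows "Dv E (L' @ u # R') u = Dv E (L @ u # R) u"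
  using Dv_split[OF assms(1)] Dv_split[OF assms(2)] assms(3,4) by simp

definition gapv :: "'a list \<Rightarrow> 'a set \<Rightarrow> 'a set" where
  "gapv s X = {w \<in> set s. w \<notin> X \<and> (\<exists>x\<in>X. precedes s x w) \<and> (\<exists>y\<in>X. precedes s w y)}"

lemma sum_if_const:
  assumes "finite T"
  shows "(\<Sum>u\<in>T. if P u then (c::int) else 0) = c * int (card {u \<in> T. P u})"
proof -
  have "(\<Sum>u\<in>T. if P u then c else 0) = sum (\<lambda>_. c) {u \<in> T. P u}"
    using sum.inter_filter[OF assms, of "\<lambda>_. c" P] by simp
  thus ?thesis by simp
qed

lemma move1_cost:
  assumes dist: "distinct (A @ R @ v # B)"
    and sym: "\<And>a b. E a b \<Longrightarrow> E b a"
    and cond: "\<forall>x\<in>set R. E x v \<longrightarrow> Dv E (A @ R @ v # B) x \<le> -2"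
  shows "ordering_imbalance E (A @ v # R @ B) \<le> ordering_imbalance E (A @ R @ v # B)"
proof -
  let ?s = "A @ R @ v # B" and ?t = "A @ v # R @ B"
  have dt: "distinct ?t" using dist by auto
  have st: "set ?t = set ?s" by auto
  define h where "h u = (if u \<in> set R \<and> E u v then (2::int) else 0)" for u
  define g where "g u = (if u = v then 2 * int (nbs E v (set R)) else (0::int))" for u
  have pw: "\<bar>Dv E ?t u\<bar> + h u \<le> \<bar>Dv E ?s u\<bar> + g u" if u: "u \<in> set ?s" for u
  proof -
    consider (a) "u \<in> set A" | (r) "u \<in> set R" | (v) "u = v" | (b) "u \<in> set B" using u by auto
    thus ?thesis
    proof cases
      case a
      then obtain A1 A2 where A: "A = A1 @ u # A2" by (meson split_list)
      have "Dv E ?t u = Dv E ?s u"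
        using Dv_same[of A1 u "A2 @ R @ v # B" A1 "A2 @ v # R @ B" E] dist dt A by auto
      moreover have "h u = 0" "g u = 0" using a dist unfolding h_def g_def by auto
      ultimately show ?thesis by simp
    next
      case b
      then obtain B1 B2 where Bd: "B = B1 @ u # B2" by (meson split_list)
      have "Dv E ?t u = Dv E ?s u"
        using Dv_same[of "A @ R @ v # B1" u B2 "A @ v # R @ B1" B2 E] dist dt Bd by auto
      moreover have "h u = 0" "g u = 0" using b dist unfolding h_def g_def by auto
      ultimately show ?thesis by simp
    next
      case r
      then obtain R1 R2 where Rd: "R = R1 @ u # R2" by (meson split_list)
      have d1: "distinct ((A @ R1) @ u # (R2 @ v # B))" using dist Rd by auto
      have d2: "distinct ((A @ v # R1) @ u # (R2 @ B))" using dt Rd by auto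
      have e1: "Dv E ?s u = int (nbs E u (set (A @ R1))) - int (nbs E u (set (R2 @ v # B)))"
        using Dv_split[OF d1] Rd by simp
      have e2: "Dv E ?t u = int (nbs E u (set (A @ v # R1))) - int (nbs E u (set (R2 @ B)))"
        using Dv_split[OF d2] Rd by simp
      have n1: "nbs E u (set (A @ v # R1)) = (if E u v then 1 else 0) + nbs E u (set (A @ R1))"
        using nbs_insert[of "set (A @ R1)" v E u] d2 by auto
      have n2: "nbs E u (set (R2 @ v # B)) = (if E u v then 1 else 0) + nbs E u (set (R2 @ B))"
        using nbs_insert[of "set (R2 @ B)" v E u] d1 by auto
      have uv: "u \<noteq> v" using d1 by auto
      show ?thesis
      proof (cases "E u v")
        case True
        hence "Dv E ?s u \<le> -2" using cond r by auto
        moreover have "Dv E ?t u = Dv E ?s u + 2" using e1 e2 n1 n2 True by simp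
        moreover have "h u = 2" "g u = 0" using True r uv unfolding h_def g_def by auto
        ultimately show ?thesis by simp
      next
        case False
        hence "Dv E ?t u = Dv E ?s u" using e1 e2 n1 n2 by simp
        moreover have "h u = 0" "g u = 0" using False uv unfolding h_def g_def by auto
        ultimately show ?thesis by simp
      qed
    next
      case v
      have d1: "distinct ((A @ R) @ v # B)" using dist by auto
      have d2: "distinct (A @ v # (R @ B))" using dt by auto
      have e1: "Dv E ?s v = int (nbs E v (set (A @ R))) - int (nbs E v (set B))"
        using Dv_split[OF d1] by simp
      have e2: "Dv E ?t v = int (nbs E v (set A)) - int (nbs E v (set (R @ B)))"
        using Dv_split[OF d2] by simp
      have n1: "nbs E v (set (A @ R)) = nbs E v (set A) + nbs E v (set R)"
        using nbs_union[of "set A" "set R" E v] dist by auto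
      have n2: "nbs E v (set (R @ B)) = nbs E v (set R) + nbs E v (set B)"
        using nbs_union[of "set R" "set B" E v] dist by auto
      have "h v = 0" using dist unfolding h_def by auto
      moreover have "g v = 2 * int (nbs E v (set R))" unfolding g_def by simp
      moreover have "Dv E ?t v = Dv E ?s v - 2 * int (nbs E v (set R))" using e1 e2 n1 n2 by simp
      ultimately show ?thesis using v by simp
    qed
  qed
  have "(\<Sum>u\<in>set ?s. \<bar>Dv E ?t u\<bar> + h u) \<le> (\<Sum>u\<in>set ?s. \<bar>Dv E ?s u\<bar> + g u)"
    by (rule sum_mono) (use pw in auto)
  hence le: "(\<Sum>u\<in>set ?s. \<bar>Dv E ?t u\<bar>) + (\<Sum>u\<in>set ?s. h u) \<le> (\<Sum>u\<in>set ?s. \<bar>Dv E ?s u\<bar>) + (\<Sum>u\<in>set ?s. g u)"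
    by (simp add: sum.distrib)
  have sh: "(\<Sum>u\<in>set ?s. h u) = 2 * int (card {u \<in> set ?s. u \<in> set R \<and> E u v})"
    unfolding h_def by (rule sum_if_const) simp
  have "{u \<in> set ?s. u \<in> set R \<and> E u v} = {u \<in> set R. E v u}" using sym by auto
  hence sh2: "(\<Sum>u\<in>set ?s. h u) = 2 * int (nbs E v (set R))" using sh unfolding nbs_def by simp
  have sg: "(\<Sum>u\<in>set ?s. g u) = 2 * int (nbs E v (set R))"
    unfolding g_def by (simp add: sum.delta)
  have "int (ordering_imbalance E ?t) \<le> int (ordering_imbalance E ?s)"
    using le sh2 sg unfolding cost_int st by simp
  thus ?thesis by simp
qed

lemma left_rev: "left_nbrs E (rev s) v = right_nbrs E s v"
  unfolding left_nbrs_def right_nbrs_def by (simp add: prec_rev)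

lemma right_rev: "right_nbrs E (rev s) v = left_nbrs E s v"
  unfolding left_nbrs_def right_nbrs_def by (simp add: prec_rev)

lemma Dv_rev: "Dv E (rev s) v = - Dv E s v"
  unfolding Dv_def by (simp add: left_rev right_rev)

lemma cost_rev: "ordering_imbalance E (rev s) = ordering_imbalance E s"
proof -
  have "int (ordering_imbalance E (rev s)) = int (ordering_imbalance E s)"
    unfolding cost_int by (simp add: Dv_rev)
  thus ?thesis by simp
qed

lemma gapv_rev: "gapv (rev s) X = gapv s X"
  unfolding gapv_def by (auto simp: prec_rev)

lemma move1_gapv:
  assumes dist: "distinct (A @ R @ v # B)" and "set R \<subseteq> X" "v \<notin> X" "set A \<inter> X = {}"
    "R \<noteq> []" "set B \<inter> X \<noteq> {}"
  shows "gapv (A @ v # R @ B) X \<subset> gapv (A @ R @ v # B) X"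
proof -
  obtain x0 where x0: "x0 \<in> set R" using assms(5) by (cases R) auto
  obtain y0 where y0: "y0 \<in> set B" "y0 \<in> X" using assms(6) by auto
  have p1: "precedes (A @ R @ v # B) x0 v" using x0 by (simp add: prec_append prec_Cons)
  have p2: "precedes (A @ R @ v # B) v y0" using y0 by (simp add: prec_append prec_Cons)
  have vin: "v \<in> gapv (A @ R @ v # B) X"
    unfolding gapv_def using x0 y0 assms(2,3) p1 p2 by auto
  have vout: "v \<notin> gapv (A @ v # R @ B) X"
    unfolding gapv_def using assms(2,3,4) dist
    by (auto simp: prec_append prec_Cons dest: prec_set)
  have sub: "gapv (A @ v # R @ B) X \<subseteq> gapv (A @ R @ v # B) X"
  proof
    fix w assume w: "w \<in> gapv (A @ v # R @ B) X"
    hence wv: "w \<noteq> v" using vout by auto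
    have wX: "w \<notin> X" and wR: "w \<notin> set R" using w assms(2) unfolding gapv_def by auto
    obtain x where x: "x \<in> X" "precedes (A @ v # R @ B) x w" using w unfolding gapv_def by auto
    obtain y where y: "y \<in> X" "precedes (A @ v # R @ B) w y" using w unfolding gapv_def by auto
    have xv: "x \<noteq> v" "y \<noteq> v" using x y assms(3) by auto
    have "precedes (A @ R @ v # B) x w"
      using x(2) xv wv wR by (auto simp: prec_append prec_Cons)
    moreover have "precedes (A @ R @ v # B) w y"
      using y(2) xv wv wR by (auto simp: prec_append prec_Cons)
    ultimately show "w \<in> gapv (A @ R @ v # B) X"
      using w x y unfolding gapv_def by auto
  qed
  show ?thesis using sub vin vout by auto
qed

lemma dec_split:
  fixes s :: "'a list" and X :: "'a set"
  defines "A \<equiv> takeWhile (\<lambda>u. u \<notin> X) s"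
  defines "R \<equiv> takeWhile (\<lambda>u. u \<in> X) (dropWhile (\<lambda>u. u \<notin> X) s)"
  defines "Z \<equiv> dropWhile (\<lambda>u. u \<in> X) (dropWhile (\<lambda>u. u \<notin> X) s)"
  shows "s = A @ R @ Z" "set A \<inter> X = {}" "set R \<subseteq> X"
    "Z \<noteq> [] \<Longrightarrow> hd Z \<notin> X"
    "set s \<inter> X \<noteq> {} \<Longrightarrow> R \<noteq> []"
proof -
  show "s = A @ R @ Z" unfolding A_def R_def Z_def by (simp only: takeWhile_dropWhile_id)
  show "set A \<inter> X = {}" unfolding A_def using set_takeWhileD[of _ "\<lambda>u. u \<notin> X" s] by blast
  show "set R \<subseteq> X" unfolding R_def using set_takeWhileD[of _ "\<lambda>u. u \<in> X"] by blast
  show "Z \<noteq> [] \<Longrightarrow> hd Z \<notin> X" unfolding Z_def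
    using hd_dropWhile[of "\<lambda>u. u \<in> X"] by blast
  assume "set s \<inter> X \<noteq> {}"
  hence ne: "dropWhile (\<lambda>u. u \<notin> X) s \<noteq> []" unfolding dropWhile_eq_Nil_conv by blast
  hence "hd (dropWhile (\<lambda>u. u \<notin> X) s) \<in> X" using hd_dropWhile[of "\<lambda>u. u \<notin> X" s] by blast
  thus "R \<noteq> []" unfolding R_def using ne takeWhile_eq_Nil_iff by metis
qed

lemma dec1:
  assumes dist: "distinct s" and gap: "gapv s X \<noteq> {}"
  shows "\<exists>A R v B. s = A @ R @ v # B \<and> set A \<inter> X = {} \<and> R \<noteq> [] \<and> set R \<subseteq> X \<and> v \<notin> X
      \<and> set B \<inter> X \<noteq> {}"
proof -
  obtain A R Z where d: "s = A @ R @ Z" "set A \<inter> X = {}" "set R \<subseteq> X"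
    "Z \<noteq> [] \<Longrightarrow> hd Z \<notin> X" "set s \<inter> X \<noteq> {} \<Longrightarrow> R \<noteq> []"
    using dec_split[where s=s and X=X] by blast
  obtain w where w: "w \<in> gapv s X" using gap by auto
  obtain x where x: "x \<in> X" "precedes s x w" using w unfolding gapv_def by auto
  obtain y where y: "y \<in> X" "precedes s w y" using w unfolding gapv_def by auto
  have wX: "w \<notin> X" using w unfolding gapv_def by auto
  have xs: "x \<in> set s" using x prec_set by metis
  have xA: "x \<notin> set A" using x(1) d(2) by auto
  have "precedes (A @ (R @ Z)) x w" using x(2) d(1) by simp
  hence "precedes A x w \<or> (x \<in> set A \<and> w \<in> set (R @ Z)) \<or> precedes (R @ Z) x w"
    unfolding prec_append[of A "R @ Z"] .
  hence pRZ: "precedes (R @ Z) x w" using xA prec_set[of A x w] by blast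
  have wR: "w \<notin> set R" using wX d(3) by auto
  have "w \<in> set (R @ Z)" using prec_set[OF pRZ] by simp
  hence wZ: "w \<in> set Z" using wR by simp
  have wA: "w \<notin> set A" using dist d(1) wZ by auto
  have "precedes (A @ (R @ Z)) w y" using y(2) d(1) by simp
  hence "precedes A w y \<or> (w \<in> set A \<and> y \<in> set (R @ Z)) \<or> precedes (R @ Z) w y"
    unfolding prec_append[of A "R @ Z"] .
  hence "precedes (R @ Z) w y" using wA prec_set[of A w y] by blast
  hence "precedes R w y \<or> (w \<in> set R \<and> y \<in> set Z) \<or> precedes Z w y"
    unfolding prec_append[of R Z] .
  hence pZ: "precedes Z w y" using wR prec_set[of R w y] by blast
  obtain v B where Z: "Z = v # B" using wZ by (cases Z) auto
  have "(v = w \<and> y \<in> set B) \<or> precedes B w y" using pZ Z prec_Cons by metis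
  hence yB: "y \<in> set B" using prec_set[of B w y] by blast
  have "v \<notin> X" using d(4) Z by simp
  moreover have "R \<noteq> []" using d(5) xs x by auto
  ultimately show ?thesis using d(1,2,3) Z yB y by blast
qed

lemma nogap_consec:
  assumes dist: "distinct s" and sub: "X \<subseteq> set s" and gap: "gapv s X = {}"
  shows "consecutive_in s X"
proof (cases "X = {}")
  case True
  thus ?thesis unfolding consecutive_in_def by (intro exI[of _ "[]"] exI[of _ "[]"] exI[of _ s]) simp
next
  case False
  obtain A R Z where d: "s = A @ R @ Z" "set A \<inter> X = {}" "set R \<subseteq> X"
    "Z \<noteq> [] \<Longrightarrow> hd Z \<notin> X" "set s \<inter> X \<noteq> {} \<Longrightarrow> R \<noteq> []"
    using dec_split[where s=s and X=X] by blast
  have Rne: "R \<noteq> []" using d(5) sub False by auto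
  have "set Z \<inter> X = {}"
  proof (rule ccontr)
    assume "set Z \<inter> X \<noteq> {}"
    then obtain z where z: "z \<in> set Z" "z \<in> X" by auto
    then obtain v B where Z: "Z = v # B" by (cases Z) auto
    have vX: "v \<notin> X" using d(4) Z by simp
    hence zB: "z \<in> set B" using z Z by auto
    obtain r where r: "r \<in> set R" using Rne by (cases R) auto
    have p1: "precedes s r v" using d(1) Z r by (simp add: prec_append prec_Cons)
    have p2: "precedes s v z" using d(1) Z zB by (simp add: prec_append prec_Cons)
    have "v \<in> set s" using d(1) Z by simp
    hence "v \<in> gapv s X" unfolding gapv_def using p1 p2 vX r d(3) z by auto
    thus False using gap by auto
  qed
  hence "set R = X" using sub d by auto
  thus ?thesis unfolding consecutive_in_def using d(1) by blast
qed

lemma nbs_cong: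
  assumes "\<forall>u\<in>T. E x u \<longleftrightarrow> E y u"
  shows "nbs E x T = nbs E y T"
proof -
  have "{u \<in> T. E x u} = {u \<in> T. E y u}" using assms by auto
  thus ?thesis unfolding nbs_def by simp
qed

lemma twin_Dv:
  assumes dist: "distinct (P @ x # M @ y # Q)"
    and exy: "E x y" "E y x"
    and tw: "\<forall>u. u \<noteq> x \<longrightarrow> u \<noteq> y \<longrightarrow> (E x u \<longleftrightarrow> E y u)"
  shows "Dv E (P @ x # M @ y # Q) y = Dv E (P @ x # M @ y # Q) x + 2 + 2 * int (nbs E x (set M))"
proof -
  have d1: "distinct (P @ x # (M @ y # Q))" using dist by simp
  have d2: "distinct ((P @ x # M) @ y # Q)" using dist by simp
  have ex: "Dv E (P @ x # M @ y # Q) x = int (nbs E x (set P)) - int (nbs E x (set (M @ y # Q)))"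
    using Dv_split[OF d1] by simp
  have ey: "Dv E (P @ x # M @ y # Q) y = int (nbs E y (set (P @ x # M))) - int (nbs E y (set Q))"
    using Dv_split[OF d2] by simp
  have n1: "nbs E x (set (M @ y # Q)) = 1 + nbs E x (set M) + nbs E x (set Q)"
  proof -
    have "set (M @ y # Q) = insert y (set M \<union> set Q)" by auto
    moreover have "nbs E x (insert y (set M \<union> set Q)) = 1 + nbs E x (set M \<union> set Q)"
      using nbs_insert[of "set M \<union> set Q" y E x] dist exy by auto
    moreover have "nbs E x (set M \<union> set Q) = nbs E x (set M) + nbs E x (set Q)"
      using nbs_union[of "set M" "set Q" E x] dist by auto
    ultimately show ?thesis by simp
  qed
  have n2: "nbs E y (set (P @ x # M)) = 1 + nbs E y (set P) + nbs E y (set M)"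
  proof -
    have "set (P @ x # M) = insert x (set P \<union> set M)" by auto
    moreover have "nbs E y (insert x (set P \<union> set M)) = 1 + nbs E y (set P \<union> set M)"
      using nbs_insert[of "set P \<union> set M" x E y] dist exy by auto
    moreover have "nbs E y (set P \<union> set M) = nbs E y (set P) + nbs E y (set M)"
      using nbs_union[of "set P" "set M" E y] dist by auto
    ultimately show ?thesis by simp
  qed
  have c: "nbs E x T = nbs E y T" if "x \<notin> T" "y \<notin> T" for T
    using nbs_cong[of T E x y] tw that by metis
  have "nbs E x (set P) = nbs E y (set P)" "nbs E x (set M) = nbs E y (set M)"
    "nbs E x (set Q) = nbs E y (set Q)" using c dist by auto
  thus ?thesis using ex ey n1 n2 by simp
qed

lemma prec_split:
  assumes "distinct s" "precedes s a b"
  shows "\<exists>P M Q. s = P @ a # M @ b # Q"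
proof -
  have "a \<in> set s" using prec_set[OF assms(2)] by simp
  then obtain P T where s: "s = P @ a # T" by (meson split_list)
  have aP: "a \<notin> set P" "a \<notin> set T" using assms(1) s by auto
  have "precedes P a b \<or> (a \<in> set P \<and> b \<in> set (a # T)) \<or> precedes (a # T) a b"
    using assms(2) s prec_append by metis
  hence "precedes (a # T) a b" using aP prec_set[of P a b] by blast
  hence "b \<in> set T \<or> precedes T a b" using prec_Cons by metis
  hence "b \<in> set T" using prec_set[of T a b] by blast
  then obtain M Q where "T = M @ b # Q" by (meson split_list)
  thus ?thesis using s by blast
qed

lemma between_in:
  assumes dist: "distinct (P @ a # M @ b # Q)" and p1: "precedes (P @ a # M @ b # Q) a v"
    and p2: "precedes (P @ a # M @ b # Q) v b"
  shows "v \<in> set M"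
proof -
  let ?s = "P @ a # M @ b # Q"
  have vs: "v \<in> set ?s" using prec_set[OF p1] by simp
  have "v \<notin> set P"
  proof
    assume "v \<in> set P"
    hence "precedes ?s v a" using prec_append_lr[of v P a "a # M @ b # Q"] by simp
    thus False using prec_asym[OF dist p1] by simp
  qed
  moreover have "v \<notin> set Q"
  proof
    assume "v \<in> set Q"
    hence "precedes ?s b v" using prec_append_lr[of b "P @ a # M @ [b]" v Q] by simp
    thus False using prec_asym[OF dist p2] by simp
  qed
  moreover have "v \<noteq> a" using p1 prec_irrefl[OF dist] by blast
  moreover have "v \<noteq> b" using p2 prec_irrefl[OF dist] by blast
  ultimately show ?thesis using vs by auto
qed

lemma prec_trans:
  assumes "distinct s" "precedes s a b" "precedes s b c" shows "precedes s a c"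
proof -
  obtain i j where ij: "i < j" "j < length s" "s ! i = a" "s ! j = b"
    using assms(2) unfolding precedes_def by blast
  obtain j' k where jk: "j' < k" "k < length s" "s ! j' = b" "s ! k = c"
    using assms(3) unfolding precedes_def by blast
  have "j = j'" using ij jk nth_eq_iff_index_eq[OF assms(1), of j j'] by simp
  hence "i < k" using ij jk by simp
  thus ?thesis unfolding precedes_def using ij jk by blast
qed

lemma twin_pair:
  assumes tw1: "\<forall>x\<in>X. \<forall>y\<in>X. x \<noteq> y \<longrightarrow> E x y"
    and tw2: "\<forall>x\<in>X. \<forall>y\<in>X. \<forall>u. u \<notin> X \<longrightarrow> E x u \<longrightarrow> E y u"
    and "x \<in> X" "y \<in> X" "x \<noteq> y"
  shows "E x y" "E y x" "\<forall>u. u \<noteq> x \<longrightarrow> u \<noteq> y \<longrightarrow> (E x u \<longleftrightarrow> E y u)"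
proof -
  show "E x y" using assms by blast
  have "y \<noteq> x" using assms(5) by simp
  thus "E y x" using tw1 assms(3,4) by blast
  show "\<forall>u. u \<noteq> x \<longrightarrow> u \<noteq> y \<longrightarrow> (E x u \<longleftrightarrow> E y u)"
  proof (intro allI impI)
    fix u assume "u \<noteq> x" "u \<noteq> y"
    show "E x u \<longleftrightarrow> E y u"
    proof (cases "u \<in> X")
      case True
      have "E x u" using tw1 assms(3) True \<open>u \<noteq> x\<close> by metis
      moreover have "E y u" using tw1 assms(4) True \<open>u \<noteq> y\<close> by metis
      ultimately show ?thesis by blast
    next
      case False
      have "E x u \<Longrightarrow> E y u" using tw2 assms(3,4) False by blast
      moreover have "E y u \<Longrightarrow> E x u" using tw2 assms(3,4) False by blast
      ultimately show ?thesis by blast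
    qed
  qed
qed

lemma one:
  fixes E :: "'a \<Rightarrow> 'a \<Rightarrow> bool" and X :: "'a set"
  assumes sym: "\<And>a b. E a b \<Longrightarrow> E b a"
    and tw1: "\<forall>x\<in>X. \<forall>y\<in>X. x \<noteq> y \<longrightarrow> E x y"
    and tw2: "\<forall>x\<in>X. \<forall>y\<in>X. \<forall>u. u \<notin> X \<longrightarrow> E x u \<longrightarrow> E y u"
  shows "distinct s \<Longrightarrow> X \<subseteq> set s \<Longrightarrow> \<exists>t. distinct t \<and> set t = set s
     \<and> ordering_imbalance E t \<le> ordering_imbalance E s
     \<and> filter (\<lambda>u. u \<notin> X) t = filter (\<lambda>u. u \<notin> X) s \<and> consecutive_in t X"
proof (induction "card (gapv s X)" arbitrary: s rule: less_induct)
  case less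
  show ?case
  proof (cases "gapv s X = {}")
    case True
    hence "consecutive_in s X" using nogap_consec[OF less.prems(1,2)] by simp
    thus ?thesis using less.prems(1) by (intro exI[of _ s]) simp
  next
    case False
    have fin: "finite (gapv s X)" unfolding gapv_def by simp
    obtain A R v B where d1: "s = A @ R @ v # B" "set A \<inter> X = {}" "R \<noteq> []" "set R \<subseteq> X"
      "v \<notin> X" "set B \<inter> X \<noteq> {}"
      using dec1[OF less.prems(1) False] by blast
    have drev: "distinct (rev s)" using less.prems(1) by simp
    have grev: "gapv (rev s) X \<noteq> {}" using False gapv_rev[of s X] by simp
    obtain A2 R2 v2 B2 where d2: "rev s = A2 @ R2 @ v2 # B2" "set A2 \<inter> X = {}" "R2 \<noteq> []"
      "set R2 \<subseteq> X" "v2 \<notin> X" "set B2 \<inter> X \<noteq> {}"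
      using dec1[OF drev grev] by blast
    show ?thesis
    proof (cases "\<forall>x\<in>set R. E x v \<longrightarrow> Dv E s x \<le> -2")
      case True
      let ?t = "A @ v # R @ B"
      have ds: "distinct (A @ R @ v # B)" using less.prems(1) d1 by simp
      have c: "ordering_imbalance E ?t \<le> ordering_imbalance E s"
        using move1_cost[OF ds, of E] sym True d1(1) by simp
      have g: "gapv ?t X \<subset> gapv s X" using move1_gapv[OF ds d1(4,5,2,3,6)] d1(1) by simp
      have lt: "card (gapv ?t X) < card (gapv s X)" using psubset_card_mono[OF fin g] .
      have dt: "distinct ?t" using ds by auto
      have st: "set ?t = set s" using d1(1) by auto
      obtain t where t: "distinct t" "set t = set ?t" "ordering_imbalance E t \<le> ordering_imbalance E ?t"
        "filter (\<lambda>u. u \<notin> X) t = filter (\<lambda>u. u \<notin> X) ?t" "consecutive_in t X"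
        using less.hyps[OF lt dt] less.prems(2) st by auto
      have fR: "filter (\<lambda>u. u \<notin> X) R = []" using d1(4) by (auto simp: filter_empty_conv)
      have "filter (\<lambda>u. u \<notin> X) ?t = filter (\<lambda>u. u \<notin> X) s" using d1(1,5) fR by simp
      thus ?thesis using t c st by (intro exI[of _ t]) auto
    next
      case False
      then obtain x0 where x0: "x0 \<in> set R" "E x0 v" "\<not> Dv E s x0 \<le> -2" by blast
      have x03: "Dv E s x0 \<ge> -1" using x0(3) by simp
      have x0X: "x0 \<in> X" using x0 d1(4) by auto
      have s2: "s = rev B2 @ v2 # rev R2 @ rev A2"
      proof -
        have "s = rev (rev s)" by simp
        also have "\<dots> = rev (A2 @ R2 @ v2 # B2)" using d2(1) by simp
        finally show ?thesis by simp
      qed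
      have key: "Dv E s y \<ge> 2" if y: "y \<in> set R2" for y
      proof -
        have yX: "y \<in> X" using y d2(4) by auto
        have ys: "y \<in> set s" using y s2 by auto
        have vs: "v \<in> set s" using d1(1) by auto
        have pv: "precedes s v y"
        proof (rule ccontr)
          assume np: "\<not> precedes s v y"
          have yv: "y \<noteq> v" using yX d1(5) by auto
          have pyv: "precedes s y v" using prec_total[OF ys vs yv] np by blast
          have yB: "y \<notin> set B"
          proof
            assume "y \<in> set B"
            hence "precedes s v y" using d1(1) prec_append_lr[of v "A @ R @ [v]" y B] by simp
            thus False using np by simp
          qed
          have yR: "y \<in> set (A @ R)" using ys d1(1) yv yB by auto
          obtain z where z: "z \<in> set B" "z \<in> X" using d1(6) by auto
          have pyz: "precedes s y z" using d1(1) yR z prec_append_lr[of y "A @ R" z "v # B"] by simp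
          have pvz: "precedes s v z" using d1(1) z prec_append_lr[of v "A @ R @ [v]" z B] by simp
          have zs: "z \<in> set s" using d1(1) z by auto
          have "z \<notin> set A2" "z \<noteq> v2" using z d2(2,5) by auto
          hence "z \<in> set B2 \<or> z \<in> set R2" using zs s2 by auto
          thus False
          proof
            assume "z \<in> set B2"
            hence "precedes s z y" using s2 y prec_append_lr[of z "rev B2" y "v2 # rev R2 @ rev A2"] by simp
            thus False using prec_asym[OF less.prems(1) pyz] by simp
          next
            assume zR: "z \<in> set R2"
            have "v \<notin> set R2" using d1(5) d2(4) by auto
            moreover have "v \<notin> set (rev B2 @ [v2])"
            proof
              assume "v \<in> set (rev B2 @ [v2])"
              hence "precedes s v y" using s2 y prec_append_lr[of v "rev B2 @ [v2]" y "rev R2 @ rev A2"] by simp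
              thus False using np by simp
            qed
            moreover have "v \<notin> set A2"
            proof
              assume "v \<in> set A2"
              hence "precedes s z v" using s2 zR prec_append_lr[of z "rev B2 @ v2 # rev R2" v "rev A2"] by simp
              thus False using prec_asym[OF less.prems(1) pvz] by simp
            qed
            ultimately show False using vs s2 by auto
          qed
        qed
        have px: "precedes s x0 v" using d1(1) x0 prec_append_lr[of x0 "A @ R" v "v # B"] by simp
        have pxy: "precedes s x0 y" using prec_trans[OF less.prems(1) px pv] .
        obtain P M Q where sp: "s = P @ x0 # M @ y # Q" using prec_split[OF less.prems(1) pxy] by blast
        have dsp: "distinct (P @ x0 # M @ y # Q)" using less.prems(1) sp by simp
        have vM: "v \<in> set M" using between_in[OF dsp] px pv sp by simp
        have xy: "x0 \<noteq> y" using dsp by auto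
        have tp: "E x0 y" "E y x0" "\<forall>u. u \<noteq> x0 \<longrightarrow> u \<noteq> y \<longrightarrow> (E x0 u \<longleftrightarrow> E y u)"
          using twin_pair[OF tw1 tw2 x0X yX xy] by blast+
        have eq: "Dv E s y = Dv E s x0 + 2 + 2 * int (nbs E x0 (set M))"
          using twin_Dv[OF dsp tp] sp by simp
        have "v \<in> {u \<in> set M. E x0 u}" using vM x0(2) by simp
        hence "{u \<in> set M. E x0 u} \<noteq> {}" by blast
        hence "card {u \<in> set M. E x0 u} > 0" by (simp add: card_gt_0_iff)
        hence "nbs E x0 (set M) \<ge> 1" unfolding nbs_def by simp
        thus ?thesis using eq x03 by simp
      qed
      let ?t' = "A2 @ v2 # R2 @ B2"
      let ?t = "rev ?t'"
      have ds: "distinct (A2 @ R2 @ v2 # B2)" using drev d2(1) by simp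
      have cond: "\<forall>x\<in>set R2. E x v2 \<longrightarrow> Dv E (A2 @ R2 @ v2 # B2) x \<le> -2"
      proof
        fix x assume x: "x \<in> set R2"
        have "Dv E (A2 @ R2 @ v2 # B2) x = - Dv E s x" using Dv_rev[of E s x] d2(1) by simp
        thus "E x v2 \<longrightarrow> Dv E (A2 @ R2 @ v2 # B2) x \<le> -2" using key[OF x] by simp
      qed
      have c': "ordering_imbalance E ?t' \<le> ordering_imbalance E (rev s)"
        using move1_cost[OF ds, of E] sym cond d2(1) by simp
      have c: "ordering_imbalance E ?t \<le> ordering_imbalance E s"
        using c' cost_rev[of E s] cost_rev[of E ?t'] by simp
      have g': "gapv ?t' X \<subset> gapv (rev s) X" using move1_gapv[OF ds d2(4,5,2,3,6)] d2(1) by simp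
      have g: "gapv ?t X \<subset> gapv s X" using g' gapv_rev[of s X] gapv_rev[of ?t' X] by simp
      have lt: "card (gapv ?t X) < card (gapv s X)" using psubset_card_mono[OF fin g] .
      have dt: "distinct ?t" using ds by auto
      have "set ?t = set (A2 @ R2 @ v2 # B2)" by auto
      also have "\<dots> = set (rev s)" using d2(1) by simp
      finally have st: "set ?t = set s" by simp
      obtain t where t: "distinct t" "set t = set ?t" "ordering_imbalance E t \<le> ordering_imbalance E ?t"
        "filter (\<lambda>u. u \<notin> X) t = filter (\<lambda>u. u \<notin> X) ?t" "consecutive_in t X"
        using less.hyps[OF lt dt] less.prems(2) st by auto
      have fR: "filter (\<lambda>u. u \<notin> X) R2 = []" using d2(4) by (auto simp: filter_empty_conv)
      have "filter (\<lambda>u. u \<notin> X) ?t' = filter (\<lambda>u. u \<notin> X) (rev s)" using d2(1,5) fR by simp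
      hence "filter (\<lambda>u. u \<notin> X) ?t = filter (\<lambda>u. u \<notin> X) s"
      proof -
        have "filter (\<lambda>u. u \<notin> X) ?t = rev (filter (\<lambda>u. u \<notin> X) ?t')" by (simp add: rev_filter)
        also have "\<dots> = rev (filter (\<lambda>u. u \<notin> X) (rev s))" using \<open>filter (\<lambda>u. u \<notin> X) ?t' = filter (\<lambda>u. u \<notin> X) (rev s)\<close> by simp
        also have "\<dots> = filter (\<lambda>u. u \<notin> X) s" by (simp add: rev_filter[symmetric])
        finally show ?thesis .
      qed
      thus ?thesis using t c st by (intro exI[of _ t]) auto
    qed
  qed
qed

lemma swap_free_nbrs:
  assumes ne: "\<forall>p\<in>set P. \<forall>q\<in>set Q. \<not> E p q \<and> \<not> E q p"
  shows "left_nbrs E (L @ Q @ P @ R) u = left_nbrs E (L @ P @ Q @ R) u"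
    "right_nbrs E (L @ Q @ P @ R) u = right_nbrs E (L @ P @ Q @ R) u"
proof -
  have k: "precedes (L @ Q @ P @ R) a b \<longleftrightarrow> precedes (L @ P @ Q @ R) a b"
    if "E a b \<or> E b a" for a b
  proof -
    have n1: "\<not> (a \<in> set P \<and> b \<in> set Q)" "\<not> (a \<in> set Q \<and> b \<in> set P)" using ne that by blast+
    show ?thesis unfolding prec_append using n1 by auto
  qed
  show "left_nbrs E (L @ Q @ P @ R) u = left_nbrs E (L @ P @ Q @ R) u"
    unfolding left_nbrs_def using k by auto
  show "right_nbrs E (L @ Q @ P @ R) u = right_nbrs E (L @ P @ Q @ R) u"
    unfolding right_nbrs_def using k by auto
qed

lemma swap_free_cost:
  assumes ne: "\<forall>p\<in>set P. \<forall>q\<in>set Q. \<not> E p q \<and> \<not> E q p"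
  shows "ordering_imbalance E (L @ Q @ P @ R) = ordering_imbalance E (L @ P @ Q @ R)"
proof -
  have "set (L @ Q @ P @ R) = set (L @ P @ Q @ R)" by auto
  moreover have "vertex_imbalance E (L @ Q @ P @ R) u = vertex_imbalance E (L @ P @ Q @ R) u" for u
    unfolding vertex_imbalance_def using swap_free_nbrs[OF ne] by simp
  ultimately show ?thesis unfolding ordering_imbalance_def by simp
qed

lemma ins_consec:
  assumes "p @ b @ q = L @ R"
  shows "consecutive_in (L @ Xb @ R) (set b) \<or> (L \<noteq> [] \<and> last L \<in> set b)"
proof -
  from assms obtain us where
    c0: "(p = L @ us \<and> us @ (b @ q) = R) \<or> (p @ us = L \<and> b @ q = us @ R)"
    unfolding append_eq_append_conv2[of p "b @ q" L R] by blast
  hence c: "(p = L @ us \<and> R = us @ b @ q) \<or> (L = p @ us \<and> us @ R = b @ q)" by auto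
  thus ?thesis
  proof
    assume h: "p = L @ us \<and> R = us @ b @ q"
    hence "L @ Xb @ R = (L @ Xb @ us) @ b @ q" by simp
    thus ?thesis unfolding consecutive_in_def by blast
  next
    assume h: "L = p @ us \<and> us @ R = b @ q"
    have "us @ R = b @ q" using h by simp
    then obtain vs where c20: "(us = b @ vs \<and> vs @ R = q) \<or> (us @ vs = b \<and> R = vs @ q)"
      unfolding append_eq_append_conv2[of us R b q] by blast
    hence c2: "(us = b @ vs \<and> q = vs @ R) \<or> (b = us @ vs \<and> vs @ q = R)" by auto
    thus ?thesis
    proof
      assume h2: "us = b @ vs \<and> q = vs @ R"
      hence "L @ Xb @ R = p @ b @ (vs @ Xb @ R)" using h by simp
      thus ?thesis unfolding consecutive_in_def by blast
    next
      assume h2: "b = us @ vs \<and> vs @ q = R"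
      show ?thesis
      proof (cases "us = []")
        case True
        hence "L @ Xb @ R = (p @ Xb) @ b @ q" using h h2 by simp
        thus ?thesis unfolding consecutive_in_def by blast
      next
        case False
        hence "last L \<in> set b" using h h2 by simp
        thus ?thesis using h False by simp
      qed
    qed
  qed
qed

lemma rtranclp_sym:
  assumes "\<And>a b. r a b \<Longrightarrow> r b a" "r\<^sup>*\<^sup>* x y"
  shows "r\<^sup>*\<^sup>* y x"
  using assms(2)
proof (induction rule: rtranclp_induct)
  case base thus ?case by simp
next
  case (step y z)
  thus ?case using assms(1) converse_rtranclp_into_rtranclp by metis
qed

context
  fixes V :: "'a set" and E :: "'a \<Rightarrow> 'a \<Rightarrow> bool" and S :: "'a set"
  assumes gr: "graph V E" and tc: "twin_cover V E S"
begin

definition Rel where "Rel = (\<lambda>x y. x \<in> V - S \<and> y \<in> V - S \<and> E x y)"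

lemma symE: "E a b \<Longrightarrow> E b a" using gr unfolding graph_def by blast

lemma EV: "E a b \<Longrightarrow> a \<in> V \<and> b \<in> V" using gr unfolding graph_def by blast

lemma comp_def': "component_of (V - S) E C \<longleftrightarrow> (\<exists>v\<in>V - S. C = {w. Rel\<^sup>*\<^sup>* v w})"
  unfolding component_of_def Rel_def by simp

lemma Rel_W: "Rel\<^sup>*\<^sup>* v w \<Longrightarrow> v \<in> V - S \<Longrightarrow> w \<in> V - S"
  by (induction rule: rtranclp_induct) (auto simp: Rel_def)

lemma comp_sub: "component_of (V - S) E C \<Longrightarrow> C \<subseteq> V - S"
  unfolding comp_def' using Rel_W by blast

lemma comp_ne: "component_of (V - S) E C \<Longrightarrow> C \<noteq> {}"
  unfolding comp_def' by auto

lemma comp_closed: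
  assumes "component_of (V - S) E C" "x \<in> C" "y \<in> V - S" "E x y"
  shows "y \<in> C"
proof -
  obtain v where v: "v \<in> V - S" "C = {w. Rel\<^sup>*\<^sup>* v w}" using assms(1) unfolding comp_def' by blast
  have "x \<in> V - S" using comp_sub[OF assms(1)] assms(2) by blast
  hence "Rel x y" using assms(3,4) unfolding Rel_def by simp
  thus ?thesis using v assms(2) by (simp add: rtranclp.rtrancl_into_rtrancl)
qed

lemma comp_eq:
  assumes "component_of (V - S) E C" "component_of (V - S) E C'" "x \<in> C" "x \<in> C'"
  shows "C = C'"
proof -
  have sR: "Rel a b \<Longrightarrow> Rel b a" for a b unfolding Rel_def using symE by blast
  obtain v where v: "C = {w. Rel\<^sup>*\<^sup>* v w}" using assms(1) unfolding comp_def' by blast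
  obtain v' where v': "C' = {w. Rel\<^sup>*\<^sup>* v' w}" using assms(2) unfolding comp_def' by blast
  have a: "Rel\<^sup>*\<^sup>* v x" "Rel\<^sup>*\<^sup>* v' x" using assms(3,4) v v' by auto
  have b: "Rel\<^sup>*\<^sup>* v v'" using a(1) rtranclp_sym[of Rel, OF sR a(2)] by auto
  have c: "Rel\<^sup>*\<^sup>* v' v" using rtranclp_sym[of Rel, OF sR b] .
  show ?thesis unfolding v v' using b c by (auto intro: rtranclp_trans)
qed

lemma comp_tw1:
  assumes "component_of (V - S) E X" shows "\<forall>x\<in>X. \<forall>y\<in>X. x \<noteq> y \<longrightarrow> E x y"
proof (intro ballI impI)
  fix x y assume xy: "x \<in> X" "y \<in> X" "x \<noteq> y"
  have "closed_nbhd V E x = closed_nbhd V E y" using tc assms xy unfolding twin_cover_def by blast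
  moreover have "y \<in> closed_nbhd V E y" unfolding closed_nbhd_def by simp
  ultimately show "E x y" using xy(3) unfolding closed_nbhd_def by auto
qed

lemma comp_tw2:
  assumes "component_of (V - S) E X" shows "\<forall>x\<in>X. \<forall>y\<in>X. \<forall>u. u \<notin> X \<longrightarrow> E x u \<longrightarrow> E y u"
proof (intro ballI allI impI)
  fix x y u assume h: "x \<in> X" "y \<in> X" "u \<notin> X" "E x u"
  have "closed_nbhd V E x = closed_nbhd V E y" using tc assms h unfolding twin_cover_def by blast
  moreover have "u \<in> closed_nbhd V E x" using h EV unfolding closed_nbhd_def by auto
  moreover have "u \<noteq> y" using h by auto
  ultimately show "E y u" unfolding closed_nbhd_def by auto
qed

lemma comp_out:
  assumes "component_of (V - S) E X" "x \<in> X" "u \<notin> X" "E x u"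
  shows "u \<in> S"
proof (rule ccontr)
  assume "u \<notin> S"
  hence "u \<in> V - S" using EV assms(4) by blast
  hence "u \<in> X" using comp_closed[OF assms(1,2)] assms(4) by blast
  thus False using assms(3) by simp
qed

end

lemma step_lemma:
  assumes gr: "graph V E" and tc: "twin_cover V E S"
    and X: "component_of (V - S) E X"
    and D: "\<forall>Y\<in>DD. component_of (V - S) E Y \<and> Y \<noteq> X"
    and sig: "is_ordering V \<sigma>" "\<forall>C\<in>DD. consecutive_in \<sigma> C"
  shows "\<exists>\<tau>. is_ordering V \<tau> \<and> ordering_imbalance E \<tau> \<le> ordering_imbalance E \<sigma>
     \<and> (\<forall>C\<in>insert X DD. consecutive_in \<tau> C)"
proof -
  have symE: "\<And>a b. E a b \<Longrightarrow> E b a" using symE[OF gr tc] .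
  have XV: "X \<subseteq> V - S" using comp_sub[OF gr tc X] .
  have ds: "distinct \<sigma>" "set \<sigma> = V" using sig(1) unfolding is_ordering_def by auto
  obtain t1 where t1: "distinct t1" "set t1 = set \<sigma>" "ordering_imbalance E t1 \<le> ordering_imbalance E \<sigma>"
    "filter (\<lambda>u. u \<notin> X) t1 = filter (\<lambda>u. u \<notin> X) \<sigma>" "consecutive_in t1 X"
    using one[of E X \<sigma>, OF symE comp_tw1[OF gr tc X] comp_tw2[OF gr tc X] ds(1)] XV ds(2) by blast
  obtain xs Xb zs where t1d: "t1 = xs @ Xb @ zs" "set Xb = X" using t1(5) unfolding consecutive_in_def by blast
  have xsX: "set xs \<inter> X = {}" "set zs \<inter> X = {}" using t1(1) t1d by auto
  have fxs: "filter (\<lambda>u. u \<notin> X) xs = xs" "filter (\<lambda>u. u \<notin> X) zs = zs" "filter (\<lambda>u. u \<notin> X) Xb = []"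
    using xsX t1d(2) by (auto simp: filter_id_conv filter_empty_conv)
  have tau: "filter (\<lambda>u. u \<notin> X) \<sigma> = xs @ zs" using t1(4) t1d(1) fxs by simp
  define ys where "ys = rev (takeWhile (\<lambda>u. u \<notin> S) (rev xs))"
  define xs' where "xs' = rev (dropWhile (\<lambda>u. u \<notin> S) (rev xs))"
  have xsd: "xs = xs' @ ys"
  proof -
    have "xs = rev (rev xs)" by simp
    also have "\<dots> = rev (takeWhile (\<lambda>u. u \<notin> S) (rev xs) @ dropWhile (\<lambda>u. u \<notin> S) (rev xs))"
      by (simp only: takeWhile_dropWhile_id)
    also have "\<dots> = xs' @ ys" unfolding xs'_def ys_def by (simp only: rev_append)
    finally show ?thesis .
  qed
  have ysS: "set ys \<inter> S = {}" unfolding ys_def using set_takeWhileD[of _ "\<lambda>u. u \<notin> S" "rev xs"] by auto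
  have lastS: "xs' \<noteq> [] \<Longrightarrow> last xs' \<in> S"
  proof -
    assume ne: "xs' \<noteq> []"
    hence ne2: "dropWhile (\<lambda>u. u \<notin> S) (rev xs) \<noteq> []" unfolding xs'_def by simp
    have "last xs' = hd (dropWhile (\<lambda>u. u \<notin> S) (rev xs))" unfolding xs'_def using ne2 by (simp add: last_rev)
    thus "last xs' \<in> S" using hd_dropWhile[OF ne2] by simp
  qed
  let ?t2 = "xs' @ Xb @ ys @ zs"
  have ne: "\<forall>p\<in>set ys. \<forall>q\<in>set Xb. \<not> E p q \<and> \<not> E q p"
  proof (intro ballI)
    fix p q assume p: "p \<in> set ys" and q: "q \<in> set Xb"
    have pX: "p \<notin> X" using p xsd xsX by auto
    have pS: "p \<notin> S" using p ysS by auto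
    have "\<not> E q p" using comp_out[OF gr tc X] q t1d(2) pX pS by blast
    thus "\<not> E p q \<and> \<not> E q p" using symE by blast
  qed
  have c2: "ordering_imbalance E ?t2 = ordering_imbalance E t1"
    using swap_free_cost[OF ne, of xs' zs] t1d(1) xsd by simp
  have st2: "set ?t2 = V" using t1(2) ds(2) t1d(1) xsd by auto
  have dt2: "distinct ?t2" using t1(1) t1d(1) xsd by auto
  have cX: "consecutive_in ?t2 X" unfolding consecutive_in_def using t1d(2) by blast
  have cY: "consecutive_in ?t2 Y" if Y: "Y \<in> DD" for Y
  proof -
    have Yc: "component_of (V - S) E Y" "Y \<noteq> X" using D Y by auto
    have YX: "Y \<inter> X = {}"
    proof (rule ccontr)
      assume "Y \<inter> X \<noteq> {}"
      then obtain x where "x \<in> Y" "x \<in> X" by blast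
      hence "Y = X" using comp_eq[OF gr tc Yc(1) X] by blast
      thus False using Yc(2) by simp
    qed
    have YS: "Y \<inter> S = {}" using comp_sub[OF gr tc Yc(1)] by blast
    obtain p b q where Yd: "\<sigma> = p @ b @ q" "set b = Y" using sig(2) Y unfolding consecutive_in_def by blast
    have fb: "filter (\<lambda>u. u \<notin> X) b = b" using Yd(2) YX by (auto simp: filter_id_conv)
    have "filter (\<lambda>u. u \<notin> X) p @ b @ filter (\<lambda>u. u \<notin> X) q = xs' @ (ys @ zs)"
      using tau Yd(1) fb xsd by simp
    hence "consecutive_in (xs' @ Xb @ (ys @ zs)) (set b) \<or> (xs' \<noteq> [] \<and> last xs' \<in> set b)"
      using ins_consec by blast
    moreover have "\<not> (xs' \<noteq> [] \<and> last xs' \<in> set b)" using lastS Yd(2) YS by blast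
    ultimately show ?thesis using Yd(2) by blast
  qed
  show ?thesis
    using st2 dt2 c2 t1(3) cX cY unfolding is_ordering_def by (intro exI[of _ ?t2]) auto
qed

theorem corollary1:
  fixes V :: "'a set" and E :: "'a \<Rightarrow> 'a \<Rightarrow> bool" and S :: "'a set"
  assumes "graph V E"
    and "twin_cover V E S"
  shows "\<exists>\<sigma>. imbalance_optimal V E \<sigma> \<and>
           (\<forall>C. component_of (V - S) E C \<longrightarrow> consecutive_in \<sigma> C)"
proof -
  have finV: "finite V" using assms(1) unfolding graph_def by blast
  define Ord where "Ord = {\<sigma>. is_ordering V \<sigma>}"
  have "Ord \<subseteq> {xs. set xs \<subseteq> V \<and> length xs \<le> card V}"
    unfolding Ord_def is_ordering_def using distinct_card by fastforce
  hence finOrd: "finite Ord" using finite_lists_length_le[OF finV] finite_subset by blast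
  obtain \<sigma>1 where "set \<sigma>1 = V" "distinct \<sigma>1" using finite_distinct_list[OF finV] by blast
  hence neOrd: "\<sigma>1 \<in> Ord" unfolding Ord_def is_ordering_def by simp
  have Oeq: "{ordering_imbalance E \<sigma> | \<sigma>. is_ordering V \<sigma>} = ordering_imbalance E ` Ord"
    unfolding Ord_def by auto
  have finO: "finite (ordering_imbalance E ` Ord)" using finOrd by simp
  have minle: "graph_imbalance V E \<le> ordering_imbalance E \<sigma>" if "is_ordering V \<sigma>" for \<sigma>
  proof -
    have "ordering_imbalance E \<sigma> \<in> ordering_imbalance E ` Ord" using that unfolding Ord_def by simp
    thus ?thesis unfolding graph_imbalance_def Oeq using Min_le[OF finO] by blast
  qed
  have "graph_imbalance V E \<in> ordering_imbalance E ` Ord"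
    unfolding graph_imbalance_def Oeq using Min_in[OF finO] neOrd by blast
  then obtain \<sigma>0 where s0: "is_ordering V \<sigma>0" "ordering_imbalance E \<sigma>0 = graph_imbalance V E"
    unfolding Ord_def by auto
  define CC where "CC = {C. component_of (V - S) E C}"
  have "CC \<subseteq> Pow V" unfolding CC_def using comp_sub[OF assms] by blast
  hence finCC: "finite CC" using finV finite_subset by blast
  have main: "\<exists>\<sigma>. is_ordering V \<sigma> \<and> ordering_imbalance E \<sigma> \<le> graph_imbalance V E
      \<and> (\<forall>C\<in>DD. consecutive_in \<sigma> C)" if "finite DD" "DD \<subseteq> CC" for DD
    using that
  proof (induction rule: finite_subset_induct')
    case empty
    thus ?case using s0 by auto
  next
    case (insert X F)
    obtain \<sigma> where s: "is_ordering V \<sigma>" "ordering_imbalance E \<sigma> \<le> graph_imbalance V E"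
      "\<forall>C\<in>F. consecutive_in \<sigma> C" using insert.IH by blast
    have X: "component_of (V - S) E X" using insert.hyps(2) unfolding CC_def by simp
    have D: "\<forall>Y\<in>F. component_of (V - S) E Y \<and> Y \<noteq> X"
      using insert.hyps unfolding CC_def by auto
    obtain \<tau> where "is_ordering V \<tau>" "ordering_imbalance E \<tau> \<le> ordering_imbalance E \<sigma>"
      "\<forall>C\<in>insert X F. consecutive_in \<tau> C"
      using step_lemma[OF assms X D s(1,3)] by blast
    thus ?case using s(2) by (intro exI[of _ \<tau>]) auto
  qed
  obtain \<sigma> where s: "is_ordering V \<sigma>" "ordering_imbalance E \<sigma> \<le> graph_imbalance V E"
      "\<forall>C\<in>CC. consecutive_in \<sigma> C" using main[OF finCC] by blast
  have "ordering_imbalance E \<sigma> = graph_imbalance V E" using s(2) minle[OF s(1)] by simp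
  hence "imbalance_optimal V E \<sigma>" unfolding imbalance_optimal_def using s(1) by simp
  thus ?thesis using s(3) unfolding CC_def by blast
qed

end
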